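(* Consider the diffeomorphisms of $\mathbb{B}$ induced, via the identification $\Phi$, by left translations $L_A(X)=AX$ or right translations $R_A(X)=XA$ of $\mathrm{Sp}(1,1)$ ($A\in\mathrm{Sp}(1,1)$) that commute with the left $\mathrm{Sp}(1)\times\{1\}$-action and the right $\mathrm{Sp}(1)I_2$-action on $\mathrm{Sp}(1,1)$ (and hence descend to $\mathbb{B}$). These diffeomorphisms are given by (i.e., generate the same group of transformations of $\mathbb{B}$ as) the following actions on $\mathbb{B}$: (1) the left action of $\{\pm1\}\times\mathrm{Sp}(1)=\{\operatorname{diag}(\epsilon,u):\epsilon=\pm1,\ u\in\mathrm{Sp}(1)\}$ given by $\operatorname{diag}(\epsilon,u)\cdot q=\epsilon uq\overline{u}$; (2) the right action of $\mathrm{SO}_0(1,1)$ by classical Möbius transformations, $q\cdot H(t)=F_{H(t)}(q)=(1+\tanh(t)q)^{-1}(q+\tanh(t))$.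
   Context: $\mathbb{H}$ denotes the quaternions, $\mathbb{B}=\{q\in\mathbb{H}:|q|<1\}$, $\mathrm{Sp}(1)=\{u\in\mathbb{H}:|u|=1\}$. Let $I_{1,1}=\operatorname{diag}(1,-1)$ and $\mathrm{Sp}(1,1)=\{A\in M_2(\mathbb{H}):A^*I_{1,1}A=I_{1,1}\}$. For $A=\begin{pmatrix}a&c\\ b&d\end{pmatrix}\in\mathrm{Sp}(1,1)$ the classical Möbius transformation is $F_A(q)=(qc+d)^{-1}(qa+b)$. For $t\in\mathbb{R}$, $H(t)=\begin{pmatrix}\cosh t&\sinh t\\ \sinh t&\cosh t\end{pmatrix}$ and $\mathrm{SO}_0(1,1)=\{H(t):t\in\mathbb{R}\}$. Slice regular functions and regular Möbius transformations: the slice regular functions on $\mathbb{B}$ are exactly the functions $f(q)=\sum_{n\ge0}q^na_n$ ($a_n\in\mathbb{H}$) with the series converging on $\mathbb{B}$. The $*$-product is $(\sum q^na_n)*(\sum q^nb_n)=\sum_n q^n\sum_{k=0}^n a_kb_{n-k}$; $f^c(q)=\sum q^n\overline{a_n}$, $f^s=f*f^c$, $f^{-*}=(f^s)^{-1}f^c$ (pointwise, off the zero set of $f^s$). For $a,b\in\mathbb{H}$ let $\ell_{a,b}(q)=qa+b$. For $A=\begin{pmatrix}a&c\\ b&d\end{pmatrix}\in\mathrm{Sp}(1,1)$, the regular Möbius transformation is $\mathcal{F}_A=\ell_{c,d}^{-*}*\ell_{a,b}$, a diffeomorphism of $\mathbb{B}$ onto $\mathbb{B}$. Identification $\Phi$: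 $\mathrm{Sp}(1)\times\{1\}=\{\operatorname{diag}(u,1)\}$ acts on $\mathrm{Sp}(1,1)$ by left multiplication and $\mathrm{Sp}(1)I_2=\{uI_2\}$ by right multiplication. It is known that $\Phi:(\mathrm{Sp}(1)\times\{1\})\backslash\mathrm{Sp}(1,1)/\mathrm{Sp}(1)I_2\to\mathbb{B}$, $[A]\mapsto(\mathcal{F}_{A^{-1}})^{-1}(0)$, is a well-defined diffeomorphism. A diffeomorphism $\widetilde f$ of $\mathrm{Sp}(1,1)$ commuting with both actions induces the diffeomorphism $f$ of $\mathbb{B}$ with $f(\Phi([X]))=\Phi([\widetilde f(X)])$. *)

theory Defs imports "HOL-Analysis.Analysis" "HOL-Library.FuncSet" begin

codatatype quat = Quat (qRe: real) (qI: real) (qJ: real) (qK: real)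

lemma quat_eq_iff: "x = y \<longleftrightarrow> qRe x = qRe y \<and> qI x = qI y \<and> qJ x = qJ y \<and> qK x = qK y"
  by (metis quat.exhaust_sel quat.sel)

lemma quat_eqI [intro?]: "qRe x = qRe y \<Longrightarrow> qI x = qI y \<Longrightarrow> qJ x = qJ y \<Longrightarrow> qK x = qK y \<Longrightarrow> x = y"
  by (simp add: quat_eq_iff)

instantiation quat :: ab_group_add
begin
primcorec zero_quat where "qRe 0 = 0" | "qI 0 = 0" | "qJ 0 = 0" | "qK 0 = 0"
primcorec plus_quat where
  "qRe (x + y) = qRe x + qRe y" | "qI (x + y) = qI x + qI y" | "qJ (x + y) = qJ x + qJ y" | "qK (x + y) = qK x + qK y"
primcorec uminus_quat where
  "qRe (- x) = - qRe x" | "qI (- x) = - qI x" | "qJ (- x) = - qJ x" | "qK (- x) = - qK x"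
primcorec minus_quat where
  "qRe (x - y) = qRe x - qRe y" | "qI (x - y) = qI x - qI y" | "qJ (x - y) = qJ x - qJ y" | "qK (x - y) = qK x - qK y"
instance by standard (simp_all add: quat_eq_iff)
end

instantiation quat :: ring_1
begin
primcorec one_quat where "qRe 1 = 1" | "qI 1 = 0" | "qJ 1 = 0" | "qK 1 = 0"
primcorec times_quat where
  "qRe (x * y) = qRe x * qRe y - qI x * qI y - qJ x * qJ y - qK x * qK y"
| "qI (x * y) = qRe x * qI y + qI x * qRe y + qJ x * qK y - qK x * qJ y"
| "qJ (x * y) = qRe x * qJ y - qI x * qK y + qJ x * qRe y + qK x * qI y"
| "qK (x * y) = qRe x * qK y + qI x * qJ y - qJ x * qI y + qK x * qRe y"
instance by standard (simp_all add: quat_eq_iff algebra_simps)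
end

instantiation quat :: real_vector
begin
primcorec scaleR_quat where
  "qRe (scaleR r x) = r * qRe x" | "qI (scaleR r x) = r * qI x" | "qJ (scaleR r x) = r * qJ x" | "qK (scaleR r x) = r * qK x"
instance by standard (simp_all add: quat_eq_iff algebra_simps)
end

instance quat :: real_algebra_1
  by standard (simp_all add: quat_eq_iff algebra_simps)

primcorec qcnj :: "quat \<Rightarrow> quat" where
  "qRe (qcnj x) = qRe x" | "qI (qcnj x) = - qI x" | "qJ (qcnj x) = - qJ x" | "qK (qcnj x) = - qK x"

instantiation quat :: division_ring
begin
definition inverse_quat_def:
  "inverse (x::quat) = scaleR (inverse ((qRe x)^2 + (qI x)^2 + (qJ x)^2 + (qK x)^2)) (qcnj x)"
definition divide_quat_def: "(x::quat) div y = x * inverse y"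
instance
proof
  fix x y :: quat
  assume "x \<noteq> 0"
  then have nz: "(qRe x)^2 + (qI x)^2 + (qJ x)^2 + (qK x)^2 \<noteq> 0"
    by (auto simp: quat_eq_iff add_nonneg_eq_0_iff)
  show "inverse x * x = 1" using nz
    by (simp add: quat_eq_iff inverse_quat_def field_simps power2_eq_square)
  show "x * inverse x = 1" using nz
    by (simp add: quat_eq_iff inverse_quat_def field_simps power2_eq_square)
qed (simp_all add: inverse_quat_def divide_quat_def quat_eq_iff)
end

instantiation quat :: real_normed_div_algebra
begin
definition norm_quat_def: "norm x = sqrt ((qRe x)^2 + (qI x)^2 + (qJ x)^2 + (qK x)^2)"
definition sgn_quat_def: "sgn (x::quat) = x /\<^sub>R norm x"
definition dist_quat_def: "dist (x::quat) y = norm (x - y)"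
definition uniformity_quat_def [code del]:
  "(uniformity :: (quat \<times> quat) filter) = (INF e\<in>{0 <..}. principal {(x, y). dist x y < e})"
definition open_quat_def [code del]:
  "open (U :: quat set) \<longleftrightarrow> (\<forall>x\<in>U. eventually (\<lambda>(x', y). x' = x \<longrightarrow> y \<in> U) uniformity)"
instance
proof
  fix r :: real and x y :: quat
  show "(norm x = 0) = (x = 0)"
    by (auto simp: norm_quat_def quat_eq_iff add_nonneg_eq_0_iff)
  show "norm (x + y) \<le> norm x + norm y"
  proof -
    define p1 where "p1 = sqrt ((qRe x)^2 + (qI x)^2)"
    define p2 where "p2 = sqrt ((qRe y)^2 + (qI y)^2)"
    define r1 where "r1 = sqrt ((qJ x)^2 + (qK x)^2)"
    define r2 where "r2 = sqrt ((qJ y)^2 + (qK y)^2)"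
    have A: "(qRe x + qRe y)^2 + (qI x + qI y)^2 \<le> (p1 + p2)^2"
      unfolding p1_def p2_def
      by (metis add_nonneg_nonneg power_mono real_sqrt_ge_zero real_sqrt_pow2 real_sqrt_sum_squares_triangle_ineq zero_le_power2)
    have B: "(qJ x + qJ y)^2 + (qK x + qK y)^2 \<le> (r1 + r2)^2"
      unfolding r1_def r2_def
      by (metis add_nonneg_nonneg power_mono real_sqrt_ge_zero real_sqrt_pow2 real_sqrt_sum_squares_triangle_ineq zero_le_power2)
    have "norm (x + y) \<le> sqrt ((p1 + p2)^2 + (r1 + r2)^2)"
      unfolding norm_quat_def using A B by (simp add: add.assoc[symmetric])
    also have "\<dots> \<le> sqrt (p1^2 + r1^2) + sqrt (p2^2 + r2^2)"
      by (rule real_sqrt_sum_squares_triangle_ineq)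
    also have "\<dots> = norm x + norm y"
      unfolding p1_def p2_def r1_def r2_def norm_quat_def by (simp add: add.assoc)
    finally show ?thesis .
  qed
  show "norm (scaleR r x) = \<bar>r\<bar> * norm x"
    by (simp add: norm_quat_def power_mult_distrib distrib_left [symmetric] real_sqrt_mult)
  show "norm (x * y) = norm x * norm y"
    by (simp add: norm_quat_def real_sqrt_mult [symmetric] power2_eq_square algebra_simps)
qed (rule sgn_quat_def dist_quat_def open_quat_def uniformity_quat_def)+
end


definition qball :: "quat set" where "qball = ball 0 1"
definition Sp1 :: "quat set" where "Sp1 = {u. norm u = 1}"

text \<open>2x2 quaternionic matrices.  For A = [[a,c],[b,d]] we have
  a = A$1$1, c = A$1$2, b = A$2$1, d = A$2$2.\<close>
type_synonym qmat = "quat ^ 2 ^ 2"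

definition mat_a :: "qmat \<Rightarrow> quat" where "mat_a A = A $ 1 $ 1"
definition mat_c :: "qmat \<Rightarrow> quat" where "mat_c A = A $ 1 $ 2"
definition mat_b :: "qmat \<Rightarrow> quat" where "mat_b A = A $ 2 $ 1"
definition mat_d :: "qmat \<Rightarrow> quat" where "mat_d A = A $ 2 $ 2"

definition diag2 :: "quat \<Rightarrow> quat \<Rightarrow> qmat" where
  "diag2 x y = (\<chi> i j. if i = j then (if i = 1 then x else y) else 0)"

definition I11 :: qmat where "I11 = diag2 1 (-1)"

definition ctrans :: "qmat \<Rightarrow> qmat" where "ctrans A = (\<chi> i j. qcnj (A $ j $ i))"

definition Sp11 :: "qmat set" where "Sp11 = {A. ctrans A ** I11 ** A = I11}"

definition minv :: "qmat \<Rightarrow> qmat" where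
  "minv A = (THE B. B ** A = mat 1 \<and> A ** B = mat 1)"

definition mobius :: "qmat \<Rightarrow> quat \<Rightarrow> quat" where
  "mobius A q = inverse (q * mat_c A + mat_d A) * (q * mat_a A + mat_b A)"

definition Hmat :: "real \<Rightarrow> qmat" where
  "Hmat t = (\<chi> i j. of_real (if i = j then cosh t else sinh t))"

definition has_coeffs :: "(quat \<Rightarrow> quat) \<Rightarrow> (nat \<Rightarrow> quat) \<Rightarrow> bool" where
  "has_coeffs f a \<longleftrightarrow> (\<forall>q\<in>qball. (\<lambda>n. q ^ n * a n) sums f q)"

definition slice_regular :: "(quat \<Rightarrow> quat) \<Rightarrow> bool" where
  "slice_regular f \<longleftrightarrow> (\<exists>a. has_coeffs f a)"

definition coeffs :: "(quat \<Rightarrow> quat) \<Rightarrow> nat \<Rightarrow> quat" where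
  "coeffs f = (SOME a. has_coeffs f a)"

definition star_prod :: "(quat \<Rightarrow> quat) \<Rightarrow> (quat \<Rightarrow> quat) \<Rightarrow> quat \<Rightarrow> quat" (infixl \<open>\<star>\<close> 70) where
  "f \<star> g = (\<lambda>q. \<Sum>n. q ^ n * (\<Sum>k\<le>n. coeffs f k * coeffs g (n - k)))"

definition reg_conj :: "(quat \<Rightarrow> quat) \<Rightarrow> quat \<Rightarrow> quat" where
  "reg_conj f = (\<lambda>q. \<Sum>n. q ^ n * qcnj (coeffs f n))"

definition sym_fn :: "(quat \<Rightarrow> quat) \<Rightarrow> quat \<Rightarrow> quat" where
  "sym_fn f = f \<star> reg_conj f"

definition reg_inv :: "(quat \<Rightarrow> quat) \<Rightarrow> quat \<Rightarrow> quat" where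
  "reg_inv f = (\<lambda>q. inverse (sym_fn f q) * reg_conj f q)"

definition ell :: "quat \<Rightarrow> quat \<Rightarrow> quat \<Rightarrow> quat" where
  "ell a b = (\<lambda>q. q * a + b)"

definition reg_mobius :: "qmat \<Rightarrow> quat \<Rightarrow> quat" where
  "reg_mobius A = reg_inv (ell (mat_c A) (mat_d A)) \<star> ell (mat_a A) (mat_b A)"

text \<open>\<Phi>([A]) = (\<F>_{A^{-1}})^{-1}(0), computed on a representative A.\<close>
definition Phi :: "qmat \<Rightarrow> quat" where
  "Phi A = (THE q. q \<in> qball \<and> reg_mobius (minv A) q = 0)"

definition commutes_actions :: "(qmat \<Rightarrow> qmat) \<Rightarrow> bool" where
  "commutes_actions F \<longleftrightarrow>
     (\<forall>u\<in>Sp1. \<forall>X\<in>Sp11. F (diag2 u 1 ** X) = diag2 u 1 ** F X) \<and>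
     (\<forall>u\<in>Sp1. \<forall>X\<in>Sp11. F (X ** mat u) = F X ** mat u)"

definition induced :: "(qmat \<Rightarrow> qmat) \<Rightarrow> quat \<Rightarrow> quat" where
  "induced F = (\<lambda>q. Phi (F (SOME X. X \<in> Sp11 \<and> Phi X = q)))"

text \<open>Group (under composition) of transformations of the ball generated by a set of maps,
  all maps being taken as restrictions to the ball.\<close>
inductive_set gen_group :: "(quat \<Rightarrow> quat) set \<Rightarrow> (quat \<Rightarrow> quat) set" for G where
  gen_id: "restrict id qball \<in> gen_group G"
| gen_base: "f \<in> G \<Longrightarrow> restrict f qball \<in> gen_group G"
| gen_comp: "f \<in> gen_group G \<Longrightarrow> g \<in> gen_group G \<Longrightarrow> compose qball f g \<in> gen_group G"
| gen_inv: "f \<in> gen_group G \<Longrightarrow> restrict (inv_into qball f) qball \<in> gen_group G"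

definition translation_maps :: "(quat \<Rightarrow> quat) set" where
  "translation_maps =
     {induced (\<lambda>X. A ** X) | A. A \<in> Sp11 \<and> commutes_actions (\<lambda>X. A ** X)} \<union>
     {induced (\<lambda>X. X ** A) | A. A \<in> Sp11 \<and> commutes_actions (\<lambda>X. X ** A)}"

definition model_maps :: "(quat \<Rightarrow> quat) set" where
  "model_maps =
     {(\<lambda>q. of_real \<epsilon> * u * q * qcnj u) | \<epsilon> u. \<epsilon> \<in> {1, -1} \<and> u \<in> Sp1} \<union>
     {mobius (Hmat t) | t. True}"

end

theory Submission
  imports Defs
begin


lemma qcomp_of_real [simp]:
  "qRe (of_real r) = r" "qI (of_real r) = 0" "qJ (of_real r) = 0" "qK (of_real r) = 0"
  by (simp_all add: of_real_def)

lemma qcomp_numeral [simp]: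
  "qRe (numeral n) = numeral n" "qI (numeral n) = 0" "qJ (numeral n) = 0" "qK (numeral n) = 0"
  using qcomp_of_real[of "numeral n"] by (simp_all del: qcomp_of_real)

lemma qcnj_mult: "qcnj (x * y) = qcnj y * qcnj x"
  by (simp add: quat_eq_iff algebra_simps)
lemma qcnj_add [simp]: "qcnj (x + y) = qcnj x + qcnj y"
  by (simp add: quat_eq_iff)
lemma qcnj_minus [simp]: "qcnj (- x) = - qcnj x"
  by (simp add: quat_eq_iff)
lemma qcnj_diff [simp]: "qcnj (x - y) = qcnj x - qcnj y"
  by (simp add: quat_eq_iff)
lemma qcnj_zero [simp]: "qcnj 0 = 0" by (simp add: quat_eq_iff)
lemma qcnj_one [simp]: "qcnj 1 = 1" by (simp add: quat_eq_iff)
lemma qcnj_of_real [simp]: "qcnj (of_real r) = of_real r" by (simp add: quat_eq_iff)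
lemma qcnj_qcnj [simp]: "qcnj (qcnj x) = x" by (simp add: quat_eq_iff)
lemma qcnj_eq_0 [simp]: "qcnj x = 0 \<longleftrightarrow> x = 0" by (auto simp add: quat_eq_iff)

lemma norm_sq_quat: "(norm x)^2 = (qRe x)^2 + (qI x)^2 + (qJ x)^2 + (qK x)^2"
  by (simp add: norm_quat_def)

lemma mult_qcnj: "x * qcnj x = of_real ((norm x)^2)"
  unfolding norm_sq_quat by (simp add: quat_eq_iff power2_eq_square algebra_simps)
lemma qcnj_mult_self: "qcnj x * x = of_real ((norm x)^2)"
  unfolding norm_sq_quat by (simp add: quat_eq_iff power2_eq_square algebra_simps)
lemma norm_qcnj [simp]: "norm (qcnj x) = norm x"
  by (simp add: norm_quat_def)

lemma of_real_comm: "of_real r * (x::quat) = x * of_real r"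
  by (simp add: quat_eq_iff algebra_simps)

lemma inverse_unit: "norm (u::quat) = 1 \<Longrightarrow> inverse u = qcnj u"
  by (metis inverse_unique mult_qcnj mult_1 of_real_1 power_one)

lemma bl_qRe: "bounded_linear qRe"
  by (rule bounded_linear_intro[where K=1]) (auto simp: norm_quat_def intro!: real_le_rsqrt)
lemma bl_qI: "bounded_linear qI"
  by (rule bounded_linear_intro[where K=1]) (auto simp: norm_quat_def intro!: real_le_rsqrt)
lemma bl_qJ: "bounded_linear qJ"
  by (rule bounded_linear_intro[where K=1]) (auto simp: norm_quat_def intro!: real_le_rsqrt)
lemma bl_qK: "bounded_linear qK"
  by (rule bounded_linear_intro[where K=1]) (auto simp: norm_quat_def intro!: real_le_rsqrt)

lemma real_powser_zero:
  fixes a :: "nat \<Rightarrow> real"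
  assumes "\<And>x. \<bar>x\<bar> < 1 \<Longrightarrow> (\<lambda>n. a n * x ^ n) sums 0"
  shows "a m = 0"
proof (induction m rule: less_induct)
  case (less m)
  have "(\<lambda>n. a (n + m) * x ^ n) sums 0" if "x \<noteq> 0" "norm x < 1" for x :: real
  proof -
    have "(\<lambda>n. a (n + m) * x ^ (n + m)) sums (0 - (\<Sum>i<m. a i * x ^ i))"
      using sums_split_initial_segment[OF assms[of x]] that by simp
    also have "(\<Sum>i<m. a i * x ^ i) = 0" using less by simp
    finally have "(\<lambda>n. (a (n + m) * x ^ (n + m)) / x ^ m) sums (0 / x^m)"
      by (intro sums_divide) simp
    then show ?thesis using that by (simp add: power_add)
  qed
  then have "((\<lambda>x. 0::real) \<longlongrightarrow> a (0 + m)) (at (0::real))"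
    using powser_limit_0_strong[of 1 "\<lambda>n. a (n+m)" "\<lambda>_. 0::real"] by auto
  then show ?case using LIM_const_eq by fastforce
qed

lemma quat_powser_zero:
  assumes "\<And>q. q \<in> qball \<Longrightarrow> (\<lambda>n. q ^ n * w n) sums 0"
  shows "w = (\<lambda>_. 0)"
proof -
  have S: "(\<lambda>n. of_real x ^ n * w n) sums 0" if "\<bar>x\<bar> < 1" for x :: real
    using assms[of "of_real x"] that by (simp add: qball_def)
  have c: "\<And>x r. qRe (of_real r * x) = r * qRe x" "\<And>x r. qI (of_real r * x) = r * qI x"
     "\<And>x r. qJ (of_real r * x) = r * qJ x" "\<And>x r. qK (of_real r * x) = r * qK x"
    by simp_all
  have "qRe (w m) = 0" for m
    apply (rule real_powser_zero[of "\<lambda>n. qRe (w n)"])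
    using bounded_linear.sums[OF bl_qRe S] by (simp add: of_real_power[symmetric] c mult.commute del: of_real_power)
  moreover have "qI (w m) = 0" for m
    apply (rule real_powser_zero[of "\<lambda>n. qI (w n)"])
    using bounded_linear.sums[OF bl_qI S] by (simp add: of_real_power[symmetric] c mult.commute del: of_real_power)
  moreover have "qJ (w m) = 0" for m
    apply (rule real_powser_zero[of "\<lambda>n. qJ (w n)"])
    using bounded_linear.sums[OF bl_qJ S] by (simp add: of_real_power[symmetric] c mult.commute del: of_real_power)
  moreover have "qK (w m) = 0" for m
    apply (rule real_powser_zero[of "\<lambda>n. qK (w n)"])
    using bounded_linear.sums[OF bl_qK S] by (simp add: of_real_power[symmetric] c mult.commute del: of_real_power)
  ultimately show ?thesis by (auto simp: quat_eq_iff fun_eq_iff)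
qed



definition mk :: "quat \<Rightarrow> quat \<Rightarrow> quat \<Rightarrow> quat \<Rightarrow> qmat" where
  "mk a c b d = (\<chi> i j. if i = 1 then (if j = 1 then a else c) else (if j = 1 then b else d))"

lemma two_ne [simp]: "(2::2) \<noteq> 1" "(1::2) \<noteq> 2" by simp_all

lemma mk_sel [simp]: "mat_a (mk a c b d) = a" "mat_c (mk a c b d) = c"
  "mat_b (mk a c b d) = b" "mat_d (mk a c b d) = d"
  by (simp_all add: mk_def mat_a_def mat_b_def mat_c_def mat_d_def)

lemma qmat_eq_iff: "(A::qmat) = B \<longleftrightarrow> mat_a A = mat_a B \<and> mat_c A = mat_c B \<and> mat_b A = mat_b B \<and> mat_d A = mat_d B"
  by (auto simp: vec_eq_iff forall_2 mat_a_def mat_b_def mat_c_def mat_d_def)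

lemma mk_eta: "mk (mat_a A) (mat_c A) (mat_b A) (mat_d A) = A"
  by (simp add: qmat_eq_iff)

lemma mult_sel [simp]:
  "mat_a (A ** B) = mat_a A * mat_a B + mat_c A * mat_b B"
  "mat_c (A ** B) = mat_a A * mat_c B + mat_c A * mat_d B"
  "mat_b (A ** B) = mat_b A * mat_a B + mat_d A * mat_b B"
  "mat_d (A ** B) = mat_b A * mat_c B + mat_d A * mat_d B"
  by (simp_all add: matrix_matrix_mult_def sum_2 mat_a_def mat_b_def mat_c_def mat_d_def)

lemma ctrans_sel [simp]:
  "mat_a (ctrans A) = qcnj (mat_a A)" "mat_c (ctrans A) = qcnj (mat_b A)"
  "mat_b (ctrans A) = qcnj (mat_c A)" "mat_d (ctrans A) = qcnj (mat_d A)"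
  by (simp_all add: ctrans_def mat_a_def mat_b_def mat_c_def mat_d_def)

lemma diag2_sel [simp]:
  "mat_a (diag2 x y) = x" "mat_c (diag2 x y) = 0" "mat_b (diag2 x y) = 0" "mat_d (diag2 x y) = y"
  by (simp_all add: diag2_def mat_a_def mat_b_def mat_c_def mat_d_def)

lemma I11_sel [simp]:
  "mat_a I11 = 1" "mat_c I11 = 0" "mat_b I11 = 0" "mat_d I11 = -1"
  by (simp_all add: I11_def)

lemma matc_sel [simp]:
  "mat_a (mat x) = x" "mat_c (mat x) = 0" "mat_b (mat x) = 0" "mat_d (mat x) = x"
  by (simp_all add: mat_def mat_a_def mat_b_def mat_c_def mat_d_def)

lemma Hmat_sel [simp]:
  "mat_a (Hmat t) = of_real (cosh t)" "mat_c (Hmat t) = of_real (sinh t)"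
  "mat_b (Hmat t) = of_real (sinh t)" "mat_d (Hmat t) = of_real (cosh t)"
  by (simp_all add: Hmat_def mat_a_def mat_b_def mat_c_def mat_d_def)

lemma Sp11_iff: "A \<in> Sp11 \<longleftrightarrow>
   qcnj (mat_a A) * mat_a A - qcnj (mat_b A) * mat_b A = 1 \<and>
   qcnj (mat_a A) * mat_c A - qcnj (mat_b A) * mat_d A = 0 \<and>
   qcnj (mat_c A) * mat_a A - qcnj (mat_d A) * mat_b A = 0 \<and>
   qcnj (mat_c A) * mat_c A - qcnj (mat_d A) * mat_d A = -1"
  unfolding Sp11_def qmat_eq_iff by (simp add: algebra_simps)

lemma ctrans_mult: "ctrans (A ** B) = ctrans B ** ctrans A"
  unfolding qmat_eq_iff by (simp add: qcnj_mult)

lemma ctrans_I11 [simp]: "ctrans I11 = I11" by (simp add: qmat_eq_iff)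

lemma Sp11_mult: assumes "A \<in> Sp11" "B \<in> Sp11" shows "A ** B \<in> Sp11"
proof -
  have "ctrans (A ** B) ** I11 ** (A ** B) = ctrans B ** (ctrans A ** I11 ** A) ** B"
    by (simp only: ctrans_mult matrix_mul_assoc)
  also have "\<dots> = I11" using assms by (simp add: Sp11_def)
  finally show ?thesis by (simp add: Sp11_def)
qed

lemma Sp11_one: "mat 1 \<in> Sp11"
  unfolding Sp11_def qmat_eq_iff by simp

context
  fixes X :: qmat and a b c d
  assumes X: "X \<in> Sp11"
  defines "a \<equiv> mat_a X" and "b \<equiv> mat_b X" and "c \<equiv> mat_c X" and "d \<equiv> mat_d X"
begin

lemma Sp_e1: "qcnj a * a - qcnj b * b = 1" and Sp_e2: "qcnj a * c = qcnj b * d"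
  and Sp_e4: "qcnj c * c - qcnj d * d = -1"
  using X unfolding Sp11_iff a_def b_def c_def d_def by auto

lemma Sp_na: "(norm a)^2 = 1 + (norm b)^2"
proof -
  have "of_real ((norm a)^2) - of_real ((norm b)^2) = (1::quat)"
    using Sp_e1 by (simp add: qcnj_mult_self)
  then have "of_real ((norm a)^2 - (norm b)^2) = (of_real 1::quat)" by simp
  then show ?thesis by (simp only: of_real_eq_iff)
qed

lemma Sp_nd: "(norm d)^2 = 1 + (norm c)^2"
proof -
  have "of_real ((norm c)^2) - of_real ((norm d)^2) = (-1::quat)"
    using Sp_e4 by (simp add: qcnj_mult_self)
  then have "of_real ((norm c)^2 - (norm d)^2) = (of_real (-1)::quat)" by simp
  then show ?thesis by (simp only: of_real_eq_iff)
qed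

lemma Sp_nbc: "norm b = norm c"
proof -
  have "norm a * norm c = norm b * norm d"
    using arg_cong[OF Sp_e2, of norm] by (simp add: norm_mult)
  then have "(norm a)^2 * (norm c)^2 = (norm b)^2 * (norm d)^2"
    by (metis power_mult_distrib)
  then have "(norm c)^2 = (norm b)^2" using Sp_na Sp_nd by (simp add: algebra_simps)
  then show ?thesis by (simp add: power2_eq_iff_nonneg)
qed

lemma Sp_nad: "norm a = norm d"
proof -
  have "(norm a)^2 = (norm d)^2" using Sp_na Sp_nd Sp_nbc by simp
  then show ?thesis by (metis power2_eq_iff_nonneg norm_ge_zero)
qed

lemma Sp_d_nz: "d \<noteq> 0" using Sp_nd by (smt (verit) norm_zero zero_le_power2 power_zero_numeral)
lemma Sp_a_nz: "a \<noteq> 0" using Sp_na by (smt (verit) norm_zero zero_le_power2 power_zero_numeral)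
lemma Sp_b_lt_d: "norm b < norm d"
proof -
  have "(norm b)^2 < (norm d)^2" using Sp_nd Sp_nbc by simp
  then show ?thesis by (simp add: power2_less_imp_less)
qed

lemma Sp_row: "d * qcnj c = b * qcnj a"
proof -
  have "a * (qcnj a * c) = a * (qcnj b * d)" using Sp_e2 by simp
  then have "of_real ((norm a)^2) * c = a * qcnj b * d"
    by (simp add: mult.assoc[symmetric] mult_qcnj)
  then have "qcnj c * of_real ((norm a)^2) = qcnj d * b * qcnj a"
    by (metis qcnj_mult qcnj_of_real qcnj_qcnj mult.assoc)
  then have "d * qcnj c * of_real ((norm a)^2) = d * qcnj d * b * qcnj a"
    by (simp add: mult.assoc)
  moreover have dd: "d * qcnj d = of_real ((norm a)^2)" by (simp only: mult_qcnj Sp_nad)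
  ultimately have "(d * qcnj c) * of_real ((norm a)^2) = (b * qcnj a) * of_real ((norm a)^2)"
    by (metis mult.assoc of_real_comm)
  moreover have "of_real ((norm a)^2) \<noteq> (0::quat)" using Sp_a_nz by simp
  ultimately show ?thesis using mult_right_cancel by blast
qed

lemma Sp_row': "c * qcnj d = a * qcnj b"
  using arg_cong[OF Sp_row, of qcnj] by (simp add: qcnj_mult)

lemma Sp_minv: "minv X = mk (qcnj a) (- qcnj b) (- qcnj c) (qcnj d)"
proof -
  let ?B = "mk (qcnj a) (- qcnj b) (- qcnj c) (qcnj d)"
  have e3: "qcnj c * a = qcnj d * b" using X unfolding Sp11_iff a_def b_def c_def d_def by auto
  have r1: "(norm a)^2 - (norm c)^2 = 1" using Sp_na Sp_nbc by simp
  have r2: "(norm d)^2 - (norm b)^2 = 1" using Sp_nd Sp_nbc by simp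
  have 1: "?B ** X = mat 1"
    unfolding qmat_eq_iff mult_sel mk_sel matc_sel a_def[symmetric] b_def[symmetric] c_def[symmetric] d_def[symmetric]
  proof (intro conjI)
    show "qcnj a * a + - qcnj b * b = 1" using Sp_e1 by simp
    show "qcnj a * c + - qcnj b * d = 0" using Sp_e2 by simp
    show "- qcnj c * a + qcnj d * b = 0" using e3 by simp
    show "- qcnj c * c + qcnj d * d = 1" using Sp_e4 by (simp add: algebra_simps)
  qed
  have 2: "X ** ?B = mat 1"
    unfolding qmat_eq_iff mult_sel mk_sel matc_sel a_def[symmetric] b_def[symmetric] c_def[symmetric] d_def[symmetric]
  proof (intro conjI)
    have "a * qcnj a + c * - qcnj c = of_real ((norm a)^2 - (norm c)^2)"
      by (simp only: mult_qcnj of_real_diff mult_minus_right diff_conv_add_uminus of_real_minus of_real_add)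
    then show "a * qcnj a + c * - qcnj c = 1" using r1 by simp
    show "a * - qcnj b + c * qcnj d = 0" using Sp_row' by simp
    show "b * qcnj a + d * - qcnj c = 0" using Sp_row by simp
    have "b * - qcnj b + d * qcnj d = of_real ((norm d)^2 - (norm b)^2)"
      by (simp only: mult_qcnj of_real_diff mult_minus_right diff_conv_add_uminus of_real_minus of_real_add add.commute)
    then show "b * - qcnj b + d * qcnj d = 1" using r2 by simp
  qed
  show ?thesis unfolding minv_def
  proof (rule the_equality)
    show "?B ** X = mat 1 \<and> X ** ?B = mat 1" using 1 2 by simp
    fix B' assume "B' ** X = mat 1 \<and> X ** B' = mat 1"
    then have "B' = B' ** (X ** ?B)" "?B = (B' ** X) ** ?B" using 2 by simp_all
    then show "B' = ?B" by (simp add: matrix_mul_assoc)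
  qed
qed

end


lemma seq_exists:
  fixes \<alpha> \<beta> \<gamma> :: real
  assumes a: "\<alpha> > 0" and g: "\<gamma> \<ge> 0" and disc: "\<beta>^2 \<le> 4 * \<alpha> * \<gamma>" and ga: "\<gamma> < \<alpha>"
  obtains r :: "nat \<Rightarrow> real" where "\<alpha> * r 0 = 1" "\<alpha> * r 1 + \<beta> * r 0 = 0"
    "\<And>n. \<alpha> * r (Suc (Suc n)) + \<beta> * r (Suc n) + \<gamma> * r n = 0" "r \<longlonglongrightarrow> 0"
proof -
  define x where "x = - \<beta> / (2 * \<alpha>)"
  have xx: "x^2 \<le> \<gamma> / \<alpha>"
  proof -
    have "x^2 = \<beta>^2 / (4 * \<alpha>^2)" by (simp add: x_def power_divide power_mult_distrib)
    also have "\<dots> \<le> (4 * \<alpha> * \<gamma>) / (4 * \<alpha>^2)" using disc a by (intro divide_right_mono) auto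
    also have "\<dots> = \<gamma> / \<alpha>" using a by (simp add: power2_eq_square field_simps)
    finally show ?thesis .
  qed
  define y where "y = sqrt (\<gamma> / \<alpha> - x^2)"
  have yy: "y^2 = \<gamma> / \<alpha> - x^2" using xx by (simp add: y_def)
  define l where "l = Complex x y"
  define m where "m = cnj l"
  have lm_sum: "l + m = of_real (- \<beta> / \<alpha>)" using a by (simp add: l_def m_def x_def complex_eq_iff)
  have lm_prod: "l * m = of_real (\<gamma> / \<alpha>)"
    using yy by (simp add: l_def m_def complex_eq_iff power2_eq_square algebra_simps)
  define \<rho> where "\<rho> = norm l"
  have nm: "norm m = \<rho>" by (simp add: m_def \<rho>_def)
  have \<rho>2: "\<rho>^2 = \<gamma> / \<alpha>" using yy a g by (simp add: \<rho>_def l_def cmod_def)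
  have \<rho>0: "\<rho> \<ge> 0" by (simp add: \<rho>_def)
  have \<rho>1: "\<rho> < 1"
  proof -
    have "\<rho>^2 < 1" using \<rho>2 ga a by simp
    then show ?thesis using \<rho>0 by (simp add: power2_less_imp_less)
  qed
  define sig where "sig = rec_nat (1::complex) (\<lambda>n s. l * s + m ^ Suc n)"
  have sig0: "sig 0 = 1" and sigS: "\<And>n. sig (Suc n) = l * sig n + m ^ Suc n" by (simp_all add: sig_def)
  have sigSS: "sig (Suc (Suc n)) = (l + m) * sig (Suc n) - l * m * sig n" for n
  proof -
    have "m ^ Suc n = sig (Suc n) - l * sig n" using sigS[of n] by simp
    then have "m ^ Suc (Suc n) = m * (sig (Suc n) - l * sig n)" by (metis power_Suc)
    then have "m ^ Suc (Suc n) = m * sig (Suc n) - l * m * sig n" by (simp add: algebra_simps)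
    then show ?thesis using sigS[of "Suc n"] by (simp add: algebra_simps)
  qed
  have bound: "norm (sig n) \<le> (real n + 1) * \<rho> ^ n" for n
  proof (induction n)
    case 0 then show ?case by (simp add: sig0)
  next
    case (Suc n)
    have "norm (sig (Suc n)) \<le> \<rho> * norm (sig n) + \<rho> ^ Suc n"
      by (simp add: sigS norm_mult norm_power nm \<rho>_def[symmetric] norm_triangle_le norm_triangle_ineq)
    also have "\<dots> \<le> \<rho> * ((real n + 1) * \<rho> ^ n) + \<rho> ^ Suc n"
      using Suc \<rho>0 by (simp add: mult_left_mono)
    finally show ?case by (simp add: algebra_simps)
  qed
  define r where "r n = Re (sig n) / \<alpha>" for n
  have "\<alpha> * r 0 = 1" using a by (simp add: r_def sig0)
  moreover have "\<alpha> * r 1 + \<beta> * r 0 = 0"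
  proof -
    have "sig 1 = l + m" using sigS[of 0] sig0 by simp
    then show ?thesis using a lm_sum by (simp add: r_def sig0)
  qed
  moreover have "\<alpha> * r (Suc (Suc n)) + \<beta> * r (Suc n) + \<gamma> * r n = 0" for n
  proof -
    have "Re (sig (Suc (Suc n))) = (- \<beta> / \<alpha>) * Re (sig (Suc n)) - (\<gamma> / \<alpha>) * Re (sig n)"
      unfolding sigSS lm_sum mult.assoc[symmetric, of l] lm_prod by simp
    then show ?thesis using a by (simp add: r_def field_simps)
  qed
  moreover have "r \<longlonglongrightarrow> 0"
  proof -
    have lim: "(\<lambda>n. ((real n + 1) * \<rho> ^ n) / \<alpha>) \<longlonglongrightarrow> 0"
    proof -
      have "(\<lambda>n. of_nat n * \<rho> ^ n) \<longlonglongrightarrow> 0" using \<rho>1 \<rho>0 by (intro powser_times_n_limit_0) simp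
      moreover have "(\<lambda>n. \<rho> ^ n) \<longlonglongrightarrow> 0" using \<rho>1 \<rho>0 by (intro LIMSEQ_power_zero) simp
      ultimately have "(\<lambda>n. of_nat n * \<rho> ^ n + \<rho> ^ n) \<longlonglongrightarrow> 0 + 0" by (rule tendsto_add)
      then have "(\<lambda>n. (of_nat n * \<rho> ^ n + \<rho> ^ n) / \<alpha>) \<longlonglongrightarrow> (0 + 0) / \<alpha>" by (intro tendsto_divide tendsto_const) (use a in auto)
      then show ?thesis by (simp add: algebra_simps)
    qed
    show ?thesis
    proof (rule Lim_null_comparison[OF _ lim])
      show "\<forall>\<^sub>F n in sequentially. norm (r n) \<le> (real n + 1) * \<rho> ^ n / \<alpha>"
      proof (intro always_eventually allI)
        fix n
        have "norm (r n) = \<bar>Re (sig n)\<bar> / \<alpha>" using a by (simp add: r_def)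
        also have "\<dots> \<le> norm (sig n) / \<alpha>" using a abs_Re_le_cmod by (intro divide_right_mono) auto
        also have "\<dots> \<le> (real n + 1) * \<rho> ^ n / \<alpha>" using a bound[of n] by (intro divide_right_mono) auto
        finally show "norm (r n) \<le> (real n + 1) * \<rho> ^ n / \<alpha>" .
      qed
    qed
  qed
  ultimately show ?thesis using that by blast
qed


lemma inv_series:
  fixes \<alpha> \<beta> \<gamma> :: real
  assumes a: "\<alpha> > 0" and g: "\<gamma> \<ge> 0" and disc: "\<beta>^2 \<le> 4 * \<alpha> * \<gamma>" and ga: "\<gamma> < \<alpha>"
  obtains r :: "nat \<Rightarrow> real" where
    "\<And>q::quat. norm q < 1 \<Longrightarrow> \<alpha> *\<^sub>R 1 + \<beta> *\<^sub>R q + \<gamma> *\<^sub>R q^2 \<noteq> 0 \<and>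
        (\<lambda>n. r n *\<^sub>R q^n) sums inverse (\<alpha> *\<^sub>R 1 + \<beta> *\<^sub>R q + \<gamma> *\<^sub>R q^2)"
proof -
  obtain r where r0: "\<alpha> * r 0 = 1" and r1: "\<alpha> * r 1 + \<beta> * r 0 = 0"
    and rr: "\<And>n. \<alpha> * r (Suc (Suc n)) + \<beta> * r (Suc n) + \<gamma> * r n = 0" and rlim: "r \<longlonglongrightarrow> 0"
    using seq_exists[OF a g disc ga] by blast
  define v where "v N = (if N = 0 then 0 else - \<gamma> * r (N - 1))" for N
  have rec: "\<alpha> * r (Suc N) = v N - \<beta> * r N" for N
    using r1 rr[of "N - 1"] by (cases N) (auto simp: v_def algebra_simps)
  have vS: "v (Suc N) = - \<gamma> * r N" for N by (simp add: v_def)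
  show ?thesis
  proof (rule that, rule conjI)
    fix q :: quat assume q: "norm q < 1"
    define P where "P = \<alpha> *\<^sub>R 1 + \<beta> *\<^sub>R q + \<gamma> *\<^sub>R q^2"
    define S where "S N = (\<Sum>n<N. r n *\<^sub>R q^n)" for N
    define T where "T N = (\<alpha> * r N) *\<^sub>R q^N + v N *\<^sub>R q^(Suc N)" for N
    have PS: "P * S N = 1 - T N" for N
    proof (induction N)
      case 0 then show ?case using r0 by (simp add: S_def T_def v_def)
    next
      case (Suc N)
      have e: "P * (r N *\<^sub>R q^N) = (\<alpha> * r N) *\<^sub>R q^N + (\<beta> * r N) *\<^sub>R q^(Suc N) + (\<gamma> * r N) *\<^sub>R q^(Suc (Suc N))"
        by (simp add: P_def algebra_simps power2_eq_square)
      have "P * S (Suc N) = P * S N + P * (r N *\<^sub>R q^N)" by (simp add: S_def distrib_left)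
      also have "\<dots> = 1 - v N *\<^sub>R q^(Suc N) + (\<beta> * r N) *\<^sub>R q^(Suc N) + (\<gamma> * r N) *\<^sub>R q^(Suc (Suc N))"
        unfolding Suc e T_def by simp
      also have "\<dots> = 1 - (v N - \<beta> * r N) *\<^sub>R q^(Suc N) - v (Suc N) *\<^sub>R q^(Suc (Suc N))"
        by (simp add: vS algebra_simps)
      also have "\<dots> = 1 - T (Suc N)" unfolding T_def rec[symmetric] by simp
      finally show ?case .
    qed
    have Tlim: "T \<longlonglongrightarrow> 0"
    proof (rule Lim_null_comparison)
      show "\<forall>\<^sub>F N in sequentially. norm (T N) \<le> \<alpha> * \<bar>r N\<bar> + \<gamma> * \<bar>r (N - 1)\<bar>"
      proof (intro always_eventually allI)
        fix N
        have n1: "norm (q^N) \<le> 1" "norm (q^Suc N) \<le> 1" using q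
          by (simp_all add: norm_power power_le_one del: power_Suc)
        have "norm (T N) \<le> norm ((\<alpha> * r N) *\<^sub>R q^N) + norm (v N *\<^sub>R q^(Suc N))"
          unfolding T_def by (rule norm_triangle_ineq)
        also have "\<dots> = \<bar>\<alpha> * r N\<bar> * norm (q^N) + \<bar>v N\<bar> * norm (q^Suc N)" by simp
        also have "\<dots> \<le> \<bar>\<alpha> * r N\<bar> * 1 + \<bar>v N\<bar> * 1"
          using n1 by (intro add_mono mult_left_mono) auto
        also have "\<dots> \<le> \<alpha> * \<bar>r N\<bar> + \<gamma> * \<bar>r (N - 1)\<bar>" using a g
          by (simp add: v_def abs_mult)
        finally show "norm (T N) \<le> \<alpha> * \<bar>r N\<bar> + \<gamma> * \<bar>r (N - 1)\<bar>" .
      qed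
      have "(\<lambda>N. \<alpha> * \<bar>r N\<bar> + \<gamma> * \<bar>r (N - 1)\<bar>) \<longlonglongrightarrow> \<alpha> * \<bar>0\<bar> + \<gamma> * \<bar>0\<bar>"
        by (intro tendsto_intros seq_offset_neg rlim)
      then show "(\<lambda>N. \<alpha> * \<bar>r N\<bar> + \<gamma> * \<bar>r (N - 1)\<bar>) \<longlonglongrightarrow> 0" by simp
    qed
    show Pnz: "\<alpha> *\<^sub>R 1 + \<beta> *\<^sub>R q + \<gamma> *\<^sub>R q^2 \<noteq> 0"
    proof
      assume "\<alpha> *\<^sub>R 1 + \<beta> *\<^sub>R q + \<gamma> *\<^sub>R q^2 = 0"
      then have "T N = 1" for N using PS[of N] by (simp add: P_def)
      then have "(\<lambda>N. T N) \<longlonglongrightarrow> 1" by simp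
      with Tlim have "(1::quat) = 0" using LIMSEQ_unique by blast
      then show False by simp
    qed
    have SE: "S = (\<lambda>N. inverse P * (1 - T N))"
      using PS Pnz by (metis P_def left_inverse mult.assoc mult_1)
    moreover have "(\<lambda>N. inverse P * (1 - T N)) \<longlonglongrightarrow> inverse P * (1 - 0)"
      by (intro tendsto_intros Tlim)
    ultimately have "S \<longlonglongrightarrow> inverse P" by (simp only: SE) simp
    then show "(\<lambda>n. r n *\<^sub>R q^n) sums inverse (\<alpha> *\<^sub>R 1 + \<beta> *\<^sub>R q + \<gamma> *\<^sub>R q^2)"
      unfolding sums_def S_def P_def by simp
  qed
qed



lemma coeffs_unique:
  assumes "has_coeffs f e" shows "coeffs f = e"
proof -
  have h: "has_coeffs f (coeffs f)" unfolding coeffs_def using someI[of "has_coeffs f" e] assms by blast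
  have "(\<lambda>n. coeffs f n - e n) = (\<lambda>_. 0)"
  proof (rule quat_powser_zero)
    fix q assume q: "q \<in> qball"
    have "(\<lambda>n. q ^ n * coeffs f n - q ^ n * e n) sums (f q - f q)"
      using h assms q unfolding has_coeffs_def by (intro sums_diff) auto
    then show "(\<lambda>n. q ^ n * (coeffs f n - e n)) sums 0" by (simp add: right_diff_distrib)
  qed
  then show ?thesis by (auto simp: fun_eq_iff)
qed

lemma has_coeffs_coeffs: "slice_regular f \<Longrightarrow> has_coeffs f (coeffs f)"
  unfolding slice_regular_def coeffs_def using someI_ex[of "has_coeffs f"] by blast

definition ellc :: "quat \<Rightarrow> quat \<Rightarrow> nat \<Rightarrow> quat" where
  "ellc a b n = (if n = 0 then b else if n = 1 then a else 0)"

lemma ell_sums: "(\<lambda>n. q ^ n * ellc a b n) sums ell a b q"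
proof -
  have "(\<lambda>n. q ^ n * ellc a b n) sums (\<Sum>n\<in>{0,1}. q ^ n * ellc a b n)"
    by (rule sums_finite) (auto simp: ellc_def)
  then show ?thesis by (simp add: ellc_def ell_def add.commute)
qed

lemma coeffs_ell: "coeffs (ell a b) = ellc a b"
  by (rule coeffs_unique) (simp add: has_coeffs_def ell_sums)

lemma slice_regular_ell: "slice_regular (ell a b)"
  unfolding slice_regular_def has_coeffs_def using ell_sums by blast

lemma reg_conj_ell: "reg_conj (ell c d) = ell (qcnj c) (qcnj d)"
proof
  fix q
  have "(\<lambda>n. q ^ n * qcnj (coeffs (ell c d) n)) = (\<lambda>n. q ^ n * ellc (qcnj c) (qcnj d) n)"
    by (auto simp: coeffs_ell ellc_def fun_eq_iff)
  then show "reg_conj (ell c d) q = ell (qcnj c) (qcnj d) q"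
    unfolding reg_conj_def using ell_sums sums_unique by metis
qed

lemma star_ell:
  assumes g: "slice_regular g" and q: "q \<in> qball"
  shows "(g \<star> ell a b) q = g q * b + q * g q * a"
proof -
  define s where "s = coeffs g"
  have hs: "(\<lambda>n. q ^ n * s n) sums g q" using has_coeffs_coeffs[OF g] q by (simp add: has_coeffs_def s_def)
  have inner: "(\<Sum>k\<le>n. s k * ellc a b (n - k)) = s n * b + (if n = 0 then 0 else s (n - 1) * a)" for n
  proof (cases n)
    case 0 then show ?thesis by (simp add: ellc_def)
  next
    case (Suc m)
    have "(\<Sum>k\<le>Suc m. s k * ellc a b (Suc m - k)) = (\<Sum>k<m. s k * ellc a b (Suc m - k)) + s m * a + s (Suc m) * b"
      by (simp add: lessThan_Suc_atMost[symmetric] ellc_def)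
    also have "(\<Sum>k<m. s k * ellc a b (Suc m - k)) = 0"
      by (intro sum.neutral) (auto simp: ellc_def)
    finally show ?thesis using Suc by simp
  qed
  have s1: "(\<lambda>n. q ^ n * s n * b) sums (g q * b)" using hs by (rule sums_mult2)
  have s2: "(\<lambda>n. q ^ n * (if n = 0 then 0 else s (n - 1) * a)) sums (q * g q * a)"
  proof -
    have "(\<lambda>n. q * (q ^ n * s n) * a) sums (q * g q * a)" using hs by (intro sums_mult2 sums_mult)
    then have "(\<lambda>n. q ^ Suc n * (if Suc n = 0 then 0 else s (Suc n - 1) * a)) sums (q * g q * a)"
      by (simp add: mult.assoc)
    then show ?thesis by (subst (asm) sums_Suc_iff) simp
  qed
  have "(\<lambda>n. q ^ n * (\<Sum>k\<le>n. coeffs g k * coeffs (ell a b) (n - k))) sums (g q * b + q * g q * a)"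
    unfolding coeffs_ell s_def[symmetric] inner using sums_add[OF s1 s2] by (simp add: distrib_left mult.assoc)
  then show ?thesis unfolding star_prod_def by (simp add: sums_unique[symmetric])
qed

definition Pol :: "quat \<Rightarrow> quat \<Rightarrow> quat \<Rightarrow> quat" where
  "Pol c d q = (norm d)^2 *\<^sub>R 1 + (2 * qRe (d * qcnj c)) *\<^sub>R q + (norm c)^2 *\<^sub>R q^2"

lemma sym_fn_ell: "q \<in> qball \<Longrightarrow> sym_fn (ell c d) q = Pol c d q"
  unfolding sym_fn_def reg_conj_ell
  apply (subst star_ell[OF slice_regular_ell], assumption)
  unfolding Pol_def ell_def norm_sq_quat quat_eq_iff
  by (simp add: power2_eq_square algebra_simps)

lemma reg_inv_ell: assumes "q \<in> qball" shows "reg_inv (ell c d) q = inverse (Pol c d q) * (q * qcnj c + qcnj d)"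
  unfolding reg_inv_def reg_conj_ell sym_fn_ell[OF assms] by (simp add: ell_def)

lemma commute_inverse:
  fixes P q :: quat
  assumes "P * q = q * P" shows "inverse P * q = q * inverse P"
proof (cases "P = 0")
  case True then show ?thesis by simp
next
  case False
  have "inverse P * q = inverse P * (q * P) * inverse P" using False by (simp add: mult.assoc)
  also have "\<dots> = inverse P * (P * q) * inverse P" using assms by simp
  also have "\<dots> = q * inverse P" using False by (simp add: mult.assoc[symmetric])
  finally show ?thesis .
qed

lemma Pol_commute: "Pol c d q * q = q * Pol c d q"
  by (simp add: Pol_def algebra_simps power2_eq_square)

lemma Pol_commute': "q * (inverse (Pol c d q) * x) = inverse (Pol c d q) * (q * x)"
  using commute_inverse[OF Pol_commute[of c d q]] by (metis mult.assoc)

lemma Pol_series: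
  assumes cd: "norm c < norm d"
  obtains r :: "nat \<Rightarrow> real" where
    "\<And>q. q \<in> qball \<Longrightarrow> Pol c d q \<noteq> 0 \<and> (\<lambda>n. r n *\<^sub>R q^n) sums inverse (Pol c d q)"
proof -
  have a: "(norm d)^2 > 0" using cd by (smt (verit) norm_ge_zero zero_less_power)
  have "\<bar>qRe (d * qcnj c)\<bar> \<le> norm (d * qcnj c)"
    by (simp add: norm_quat_def real_le_rsqrt)
  then have "\<bar>qRe (d * qcnj c)\<bar> \<le> norm d * norm c" by (simp add: norm_mult)
  then have "(qRe (d * qcnj c))^2 \<le> (norm d * norm c)^2"
    by (metis abs_le_square_iff abs_of_nonneg norm_ge_zero zero_le_mult_iff)
  moreover have "\<And>t x y::real. t^2 \<le> (x*y)^2 \<Longrightarrow> (2*t)^2 \<le> 4*x^2*y^2"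
    by (simp add: power_mult_distrib)
  ultimately have disc: "(2 * qRe (d * qcnj c))^2 \<le> 4 * (norm d)^2 * (norm c)^2"
    by blast
  have ga: "(norm c)^2 < (norm d)^2" using cd by (simp add: power_strict_mono)
  obtain r where r: "\<And>q::quat. norm q < 1 \<Longrightarrow> (norm d)^2 *\<^sub>R 1 + (2 * qRe (d * qcnj c)) *\<^sub>R q + (norm c)^2 *\<^sub>R q^2 \<noteq> 0 \<and>
        (\<lambda>n. r n *\<^sub>R q^n) sums inverse ((norm d)^2 *\<^sub>R 1 + (2 * qRe (d * qcnj c)) *\<^sub>R q + (norm c)^2 *\<^sub>R q^2)"
    using inv_series[OF a _ disc ga] by auto
  show ?thesis
    by (rule that[of r]) (use r in \<open>auto simp: Pol_def qball_def\<close>)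
qed

lemma slice_regular_reg_inv:
  assumes cd: "norm c < norm d"
  shows "slice_regular (reg_inv (ell c d))"
proof -
  obtain r where r: "\<And>q. q \<in> qball \<Longrightarrow> Pol c d q \<noteq> 0 \<and> (\<lambda>n. r n *\<^sub>R q^n) sums inverse (Pol c d q)"
    using Pol_series[OF cd] by blast
  define s where "s n = r n *\<^sub>R qcnj d + (if n = 0 then 0 else r (n - 1) *\<^sub>R qcnj c)" for n
  have "has_coeffs (reg_inv (ell c d)) s"
    unfolding has_coeffs_def
  proof
    fix q assume q: "q \<in> qball"
    have hs: "(\<lambda>n. r n *\<^sub>R q^n) sums inverse (Pol c d q)" using r q by blast
    have s1: "(\<lambda>n. r n *\<^sub>R q^n * qcnj d) sums (inverse (Pol c d q) * qcnj d)" using hs by (rule sums_mult2)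
    have s2: "(\<lambda>n. if n = 0 then 0 else r (n - 1) *\<^sub>R q^n * qcnj c) sums (q * inverse (Pol c d q) * qcnj c)"
    proof -
      have "(\<lambda>n. q * (r n *\<^sub>R q^n) * qcnj c) sums (q * inverse (Pol c d q) * qcnj c)"
        using hs by (intro sums_mult2 sums_mult)
      then have "(\<lambda>n. (\<lambda>n. if n = 0 then 0 else r (n - 1) *\<^sub>R q^n * qcnj c) (Suc n)) sums (q * inverse (Pol c d q) * qcnj c)"
        by (simp add: mult.assoc)
      then show ?thesis by (subst (asm) sums_Suc_iff) simp
    qed
    have "(\<lambda>n. q ^ n * s n) = (\<lambda>n. r n *\<^sub>R q^n * qcnj d + (if n = 0 then 0 else r (n - 1) *\<^sub>R q^n * qcnj c))"
      by (auto simp: s_def fun_eq_iff distrib_left)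
    moreover have "inverse (Pol c d q) * qcnj d + q * inverse (Pol c d q) * qcnj c = reg_inv (ell c d) q"
      using q by (simp add: reg_inv_ell distrib_left distrib_right mult.assoc Pol_commute')
    ultimately show "(\<lambda>n. q ^ n * s n) sums reg_inv (ell c d) q" using sums_add[OF s1 s2] by simp
  qed
  then show ?thesis unfolding slice_regular_def by blast
qed

lemma reg_mobius_formula:
  assumes cd: "norm (mat_c B) < norm (mat_d B)" and q: "q \<in> qball"
  shows "Pol (mat_c B) (mat_d B) q \<noteq> 0"
    and "reg_mobius B q = inverse (Pol (mat_c B) (mat_d B) q) *
      ((q * qcnj (mat_c B) + qcnj (mat_d B)) * mat_b B + q * (q * qcnj (mat_c B) + qcnj (mat_d B)) * mat_a B)"
proof -
  show "Pol (mat_c B) (mat_d B) q \<noteq> 0" using Pol_series[OF cd] q by metis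
  show "reg_mobius B q = inverse (Pol (mat_c B) (mat_d B) q) *
      ((q * qcnj (mat_c B) + qcnj (mat_d B)) * mat_b B + q * (q * qcnj (mat_c B) + qcnj (mat_d B)) * mat_a B)"
    unfolding reg_mobius_def
    using q
    by (simp add: star_ell[OF slice_regular_reg_inv[OF cd] q] reg_inv_ell distrib_left distrib_right mult.assoc Pol_commute')
qed



lemma inv_cancel_simps:
  fixes d x :: quat assumes "d \<noteq> 0"
  shows "d * (inverse d * x) = x" "inverse d * (d * x) = x" "x * inverse d * d = x" "x * d * inverse d = x"
  using assms by (simp_all add: mult.assoc[symmetric] mult.assoc)

lemma N_factor:
  fixes a b c d q :: quat
  assumes d: "d \<noteq> 0" and row: "d * qcnj c = b * qcnj a"
  shows "(q * - b + d) * - qcnj c + q * (q * - b + d) * qcnj a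
       = ((q - b * inverse d) * d - q * (q - b * inverse d) * b) * qcnj a"
proof -
  have cc: "qcnj c = inverse d * (b * qcnj a)"
    using row d by (metis inv_cancel_simps(2))
  show ?thesis unfolding cc
    by (simp add: algebra_simps inv_cancel_simps[OF d])
qed

lemma zero_unique:
  fixes b d q e :: quat
  assumes "norm b < norm d" "norm q < 1" "e * d = q * e * b"
  shows "e = 0"
proof (rule ccontr)
  assume e: "e \<noteq> 0"
  have "norm e * norm d = norm q * norm e * norm b" using arg_cong[OF assms(3), of norm] by (simp add: norm_mult)
  then have "norm d = norm q * norm b" using e by (simp add: algebra_simps)
  also have "\<dots> \<le> norm b" using assms(2) by (simp add: mult_left_le_one_le)
  finally show False using assms(1) by simp
qed

lemma Phi_Sp:
  assumes X: "X \<in> Sp11"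
  shows "Phi X = mat_b X * inverse (mat_d X)"
proof -
  define a b c d where "a = mat_a X" "b = mat_b X" "c = mat_c X" "d = mat_d X"
  note defs = a_b_c_d_def
  have mi: "minv X = mk (qcnj a) (- qcnj b) (- qcnj c) (qcnj d)" using Sp_minv[OF X] by (simp add: defs)
  have bd: "norm b < norm d" using Sp_b_lt_d[OF X] by (simp add: defs)
  have dnz: "d \<noteq> 0" using Sp_d_nz[OF X] by (simp add: defs)
  have anz: "a \<noteq> 0" using Sp_a_nz[OF X] by (simp add: defs)
  have row: "d * qcnj c = b * qcnj a" using Sp_row[OF X] by (simp add: defs)
  have cd: "norm (mat_c (minv X)) < norm (mat_d (minv X))" using bd by (simp add: mi)
  have key: "reg_mobius (minv X) q = 0 \<longleftrightarrow> q = b * inverse d" if q: "q \<in> qball" for q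
  proof -
    have "reg_mobius (minv X) q = 0 \<longleftrightarrow>
       (q * - b + d) * - qcnj c + q * (q * - b + d) * qcnj a = 0"
      using reg_mobius_formula[OF cd q] by (simp add: mi)
    also have "\<dots> \<longleftrightarrow> (q - b * inverse d) * d - q * (q - b * inverse d) * b = 0"
      unfolding N_factor[OF dnz row] using anz by (simp only: mult_eq_0_iff qcnj_eq_0 simp_thms)
    also have "\<dots> \<longleftrightarrow> q - b * inverse d = 0"
    proof
      assume "(q - b * inverse d) * d - q * (q - b * inverse d) * b = 0"
      then show "q - b * inverse d = 0"
        using zero_unique[OF bd, of q "q - b * inverse d"] q by (simp add: qball_def)
    qed simp
    finally show ?thesis by simp
  qed
  have "norm (b * inverse d) = norm b / norm d" by (simp only: norm_mult norm_inverse divide_inverse)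
  then have inb: "b * inverse d \<in> qball"
    using bd dnz by (simp add: qball_def divide_less_eq_1)
  show ?thesis unfolding Phi_def defs[symmetric]
  proof (rule the_equality)
    show "b * inverse d \<in> qball \<and> reg_mobius (minv X) (b * inverse d) = 0" using inb key by blast
    fix q assume "q \<in> qball \<and> reg_mobius (minv X) q = 0"
    then show "q = b * inverse d" using key by blast
  qed
qed

lemma qcnj_scaleR [simp]: "qcnj (r *\<^sub>R x) = r *\<^sub>R qcnj x" by (simp add: quat_eq_iff)

lemma Sp11_section:
  assumes q: "q \<in> qball"
  shows "\<exists>X. X \<in> Sp11 \<and> Phi X = q"
proof -
  have nq: "(norm q)^2 < 1" using q by (simp add: qball_def power_less_one_iff abs_square_less_1)
  define t where "t = 1 / sqrt (1 - (norm q)^2)"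
  have t2: "t^2 * (1 - (norm q)^2) = 1" using nq by (simp add: t_def power_divide)
  have tnz: "t \<noteq> 0" using nq by (simp add: t_def)
  define X where "X = mk (t *\<^sub>R 1) (t *\<^sub>R qcnj q) (t *\<^sub>R q) (t *\<^sub>R 1)"
  have e1: "qcnj (t *\<^sub>R 1) * (t *\<^sub>R 1) - qcnj (t *\<^sub>R q) * (t *\<^sub>R q) = of_real (t^2 * (1 - (norm q)^2))"
    unfolding quat_eq_iff norm_sq_quat by (simp add: power2_eq_square algebra_simps)
  have e2: "qcnj (t *\<^sub>R 1) * (t *\<^sub>R qcnj q) - qcnj (t *\<^sub>R q) * (t *\<^sub>R 1) = 0"
    by simp
  have e3: "qcnj (t *\<^sub>R qcnj q) * (t *\<^sub>R 1) - qcnj (t *\<^sub>R 1) * (t *\<^sub>R q) = 0"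
    by simp
  have e4: "qcnj (t *\<^sub>R qcnj q) * (t *\<^sub>R qcnj q) - qcnj (t *\<^sub>R 1) * (t *\<^sub>R 1) = - of_real (t^2 * (1 - (norm q)^2))"
    unfolding quat_eq_iff norm_sq_quat by (simp add: power2_eq_square algebra_simps)
  have XS: "X \<in> Sp11"
    unfolding Sp11_iff X_def mk_sel using e1 e2 e3 e4 t2 by simp
  have "Phi X = (t *\<^sub>R q) * inverse (t *\<^sub>R 1)"
    using Phi_Sp[OF XS] by (simp add: X_def)
  also have "\<dots> = q"
  proof -
    have nz: "t *\<^sub>R (1::quat) \<noteq> 0" using tnz by simp
    have "(t *\<^sub>R q) * inverse (t *\<^sub>R 1) = (q * (t *\<^sub>R 1)) * inverse (t *\<^sub>R 1)" by simp
    also have "\<dots> = q" using nz by (simp only: mult.assoc division_ring_class.right_inverse mult_1_right not_False_eq_True)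
    finally show ?thesis .
  qed
  finally show ?thesis using XS by blast
qed

lemma induced_obtain:
  assumes q: "q \<in> qball"
  obtains X where "X \<in> Sp11" "Phi X = q" "induced F q = Phi (F X)"
proof -
  let ?X = "SOME X. X \<in> Sp11 \<and> Phi X = q"
  have "?X \<in> Sp11 \<and> Phi ?X = q" using someI_ex[OF Sp11_section[OF q]] .
  then show ?thesis using that[of ?X] by (simp add: induced_def)
qed



definition realq :: "quat \<Rightarrow> bool" where "realq x \<longleftrightarrow> x = of_real (qRe x)"

lemma realq_scaleR: "realq x \<Longrightarrow> x = qRe x *\<^sub>R 1"
  unfolding realq_def by (metis of_real_def)

lemma realq_of_real [simp]: "realq (of_real r)" by (simp add: realq_def)

lemma realq_commute: "realq x \<Longrightarrow> u * x = x * u"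
  unfolding realq_def by (metis of_real_comm)

lemma commute_ij_real:
  assumes "Quat 0 1 0 0 * x = x * Quat 0 1 0 0" "Quat 0 0 1 0 * x = x * Quat 0 0 1 0"
  shows "realq x"
  using assms unfolding realq_def by (simp add: quat_eq_iff)

lemma Sp1_i: "Quat 0 1 0 0 \<in> Sp1" and Sp1_j: "Quat 0 0 1 0 \<in> Sp1" and Sp1_m1: "(-1::quat) \<in> Sp1"
  and Sp1_1: "(1::quat) \<in> Sp1"
  by (simp_all add: Sp1_def norm_quat_def)

lemma left_induced:
  assumes A: "A \<in> Sp11" and C: "commutes_actions (\<lambda>X. A ** X)" and q: "q \<in> qball"
  shows "mat_d A \<in> Sp1" "induced (\<lambda>X. A ** X) q = of_real 1 * mat_d A * q * qcnj (mat_d A)"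
proof -
  have "A ** (diag2 (-1) 1 ** mat 1) = diag2 (-1) 1 ** (A ** mat 1)"
    using C Sp1_m1 Sp11_one unfolding commutes_actions_def by blast
  then have e: "A ** diag2 (-1) 1 = diag2 (-1) 1 ** A" by simp
  have c0: "mat_c A = 0" using e unfolding qmat_eq_iff by (simp add: quat_eq_iff)
  have b0: "mat_b A = 0" using e unfolding qmat_eq_iff by (simp add: quat_eq_iff)
  have "qcnj (mat_d A) * mat_d A = 1" using A c0 unfolding Sp11_iff by simp
  then have "of_real ((norm (mat_d A))^2) = (of_real 1 :: quat)" by (simp only: qcnj_mult_self of_real_1)
  then have "(norm (mat_d A))^2 = 1" by (simp only: of_real_eq_iff)
  then have nd: "norm (mat_d A) = 1" by (smt (verit) norm_ge_zero power2_eq_1_iff)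
  then show "mat_d A \<in> Sp1" by (simp add: Sp1_def)
  have dA: "mat_d A \<noteq> 0" using nd by auto
  obtain X where X: "X \<in> Sp11" "Phi X = q" "induced (\<lambda>X. A ** X) q = Phi (A ** X)"
    using induced_obtain[OF q] by blast
  have dX: "mat_d X \<noteq> 0" using Sp_d_nz[OF X(1)] by simp
  have qX: "q = mat_b X * inverse (mat_d X)" using X Phi_Sp by simp
  have "Phi (A ** X) = mat_d A * mat_b X * inverse (mat_d A * mat_d X)"
    using Phi_Sp[OF Sp11_mult[OF A X(1)]] b0 by (simp add: mult.assoc)
  also have "\<dots> = mat_d A * q * inverse (mat_d A)"
    using dA dX by (simp add: qX nonzero_inverse_mult_distrib mult.assoc)
  also have "\<dots> = of_real 1 * mat_d A * q * qcnj (mat_d A)" using nd by (simp add: inverse_unit)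
  finally show "induced (\<lambda>X. A ** X) q = of_real 1 * mat_d A * q * qcnj (mat_d A)" using X by simp
qed

definition real_entries :: "qmat \<Rightarrow> bool" where
  "real_entries A \<longleftrightarrow> realq (mat_a A) \<and> realq (mat_b A) \<and> realq (mat_c A) \<and> realq (mat_d A)"

lemma right_real:
  assumes C: "commutes_actions (\<lambda>X. X ** A)"
  shows "real_entries A"
proof -
  have "mat 1 ** mat u ** A = mat 1 ** A ** mat u" if "u \<in> Sp1" for u
    using C that Sp11_one unfolding commutes_actions_def by blast
  then have ei: "mat (Quat 0 1 0 0) ** A = A ** mat (Quat 0 1 0 0)"
    and ej: "mat (Quat 0 0 1 0) ** A = A ** mat (Quat 0 0 1 0)" using Sp1_i Sp1_j by auto
  show ?thesis unfolding real_entries_def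
    using ei ej unfolding qmat_eq_iff by (auto intro!: commute_ij_real)
qed

lemma right_induced:
  assumes A: "A \<in> Sp11" and R: "real_entries A" and q: "q \<in> qball"
  shows "induced (\<lambda>X. X ** A) q = mobius A q"
proof -
  define ra rb rc rd where "ra = qRe (mat_a A)" "rb = qRe (mat_b A)" "rc = qRe (mat_c A)" "rd = qRe (mat_d A)"
  have ent: "mat_a A = ra *\<^sub>R 1" "mat_b A = rb *\<^sub>R 1" "mat_c A = rc *\<^sub>R 1" "mat_d A = rd *\<^sub>R 1"
    using R unfolding real_entries_def ra_rb_rc_rd_def by (auto intro: realq_scaleR)
  obtain X where X: "X \<in> Sp11" "Phi X = q" "induced (\<lambda>X. X ** A) q = Phi (X ** A)"
    using induced_obtain[OF q] by blast
  have dX: "mat_d X \<noteq> 0" using Sp_d_nz[OF X(1)] by simp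
  have "q * mat_d X = mat_b X" unfolding X(2)[symmetric] Phi_Sp[OF X(1)] using dX by (simp add: mult.assoc)
  then have bX: "mat_b X = q * mat_d X" by simp
  have XA: "X ** A \<in> Sp11" using Sp11_mult[OF X(1) A] .
  have nb: "mat_b (X ** A) = (ra *\<^sub>R q + rb *\<^sub>R 1) * mat_d X"
    by (simp add: ent bX algebra_simps)
  have nd: "mat_d (X ** A) = (rc *\<^sub>R q + rd *\<^sub>R 1) * mat_d X"
    by (simp add: ent bX algebra_simps)
  have den: "rc *\<^sub>R q + rd *\<^sub>R 1 \<noteq> 0" using Sp_d_nz[OF XA] nd by auto
  have "Phi (X ** A) = (ra *\<^sub>R q + rb *\<^sub>R 1) * mat_d X * inverse ((rc *\<^sub>R q + rd *\<^sub>R 1) * mat_d X)"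
    using Phi_Sp[OF XA] nb nd by simp
  also have "\<dots> = (ra *\<^sub>R q + rb *\<^sub>R 1) * inverse (rc *\<^sub>R q + rd *\<^sub>R 1)"
    using dX den by (simp only: nonzero_inverse_mult_distrib mult.assoc inv_cancel_simps(1) not_False_eq_True)
  also have "\<dots> = inverse (rc *\<^sub>R q + rd *\<^sub>R 1) * (ra *\<^sub>R q + rb *\<^sub>R 1)"
  proof -
    have "(rc *\<^sub>R q + rd *\<^sub>R 1) * (ra *\<^sub>R q + rb *\<^sub>R 1) = (ra *\<^sub>R q + rb *\<^sub>R 1) * (rc *\<^sub>R q + rd *\<^sub>R 1)"
      by (simp add: algebra_simps)
    from commute_inverse[OF this] show ?thesis by simp
  qed
  also have "\<dots> = mobius A q" by (simp add: mobius_def ent)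
  finally show ?thesis using X by simp
qed

lemma inverse_neg_scale: "inverse ((-1::real) *\<^sub>R x) = (-1::real) *\<^sub>R inverse (x::quat)"
  by (simp add: inverse_minus_eq)

lemma real_mobius_cases:
  fixes ra rb rc rd :: real
  assumes e1: "ra * ra - rb * rb = 1" and e2: "ra * rc - rb * rd = 0" and e4: "rc * rc - rd * rd = -1"
  shows "\<exists>t. (\<forall>q. inverse (rc *\<^sub>R q + rd *\<^sub>R 1) * (ra *\<^sub>R q + rb *\<^sub>R 1) = mobius (Hmat t) q) \<or>
             (\<forall>q. inverse (rc *\<^sub>R q + rd *\<^sub>R 1) * (ra *\<^sub>R q + rb *\<^sub>R 1) = - mobius (Hmat t) q)"
proof -
  have ra0: "ra \<noteq> 0"
  proof
    assume "ra = 0"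
    then have "- (rb * rb) = 1" using e1 by simp
    moreover have "rb * rb \<ge> 0" by simp
    ultimately show False by linarith
  qed
  have A1: "ra * ra = 1 + rb * rb" using e1 by linarith
  have A4: "rd * rd = 1 + rc * rc" using e4 by linarith
  have "(ra * rc) * (ra * rc) = (rb * rd) * (rb * rd)" using e2 by (simp add: algebra_simps)
  then have "(ra * ra) * (rc * rc) = (rb * rb) * (rd * rd)" by (simp only: ac_simps)
  then have "(1 + rb * rb) * (rc * rc) = (rb * rb) * (1 + rc * rc)" by (simp only: A1 A4)
  then have rcb: "rc * rc = rb * rb" by (simp add: algebra_simps)
  have rda: "rd^2 = ra^2" using A1 A4 rcb by (simp add: power2_eq_square)
  define \<sigma> where "\<sigma> = rd / ra"
  have s2: "\<sigma> = 1 \<or> \<sigma> = -1"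
  proof -
    have "\<sigma>^2 = 1" using rda ra0 by (simp add: \<sigma>_def power_divide)
    then show ?thesis by (simp add: power2_eq_1_iff)
  qed
  have rd: "rd = \<sigma> * ra" using ra0 by (simp add: \<sigma>_def)
  have "ra * rc = ra * (\<sigma> * rb)" using e2 rd by (simp add: algebra_simps)
  then have rc: "rc = \<sigma> * rb" using ra0 by simp
  define \<epsilon> where "\<epsilon> = sgn ra"
  have eps: "\<epsilon> = 1 \<or> \<epsilon> = -1" using ra0 by (auto simp: \<epsilon>_def sgn_if)
  define t where "t = arsinh (\<epsilon> * rb)"
  have st: "sinh t = \<epsilon> * rb" by (simp add: t_def)
  have ct: "cosh t = \<epsilon> * ra"
  proof -
    have "cosh t = sqrt ((\<epsilon> * rb)^2 + 1)" by (simp add: t_def cosh_arsinh_real)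
    also have "(\<epsilon> * rb)^2 + 1 = ra^2" using eps e1 by (auto simp: power2_eq_square algebra_simps)
    finally show ?thesis by (simp add: \<epsilon>_def abs_if sgn_if)
  qed
  have Ht: "mobius (Hmat t) q = inverse (rb *\<^sub>R q + ra *\<^sub>R 1) * (ra *\<^sub>R q + rb *\<^sub>R 1)" for q
  proof -
    have or: "\<And>r. (of_real r :: quat) = r *\<^sub>R 1" by (simp add: of_real_def)
    have "mobius (Hmat t) q = inverse ((\<epsilon> * rb) *\<^sub>R q + (\<epsilon> * ra) *\<^sub>R 1) * ((\<epsilon> * ra) *\<^sub>R q + (\<epsilon> * rb) *\<^sub>R 1)"
      by (simp only: mobius_def Hmat_sel st ct or mult_scaleR_right mult_1_right)
    also have "\<dots> = inverse (\<epsilon> *\<^sub>R (rb *\<^sub>R q + ra *\<^sub>R 1)) * (\<epsilon> *\<^sub>R (ra *\<^sub>R q + rb *\<^sub>R 1))"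
      by (simp only: scaleR_add_right scaleR_scaleR)
    also have "\<dots> = inverse (rb *\<^sub>R q + ra *\<^sub>R 1) * (ra *\<^sub>R q + rb *\<^sub>R 1)"
      using eps by (elim disjE) (simp_all only: scaleR_one scaleR_minus1_left inverse_minus_eq minus_mult_minus)
    finally show ?thesis .
  qed
  have L: "inverse (rc *\<^sub>R q + rd *\<^sub>R 1) * (ra *\<^sub>R q + rb *\<^sub>R 1) = \<sigma> *\<^sub>R mobius (Hmat t) q" for q
  proof -
    have "inverse (rc *\<^sub>R q + rd *\<^sub>R 1) * (ra *\<^sub>R q + rb *\<^sub>R 1) = inverse (\<sigma> *\<^sub>R (rb *\<^sub>R q + ra *\<^sub>R 1)) * (ra *\<^sub>R q + rb *\<^sub>R 1)"
      by (simp add: rc rd algebra_simps)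
    also have "\<dots> = \<sigma> *\<^sub>R mobius (Hmat t) q"
      using s2 by (elim disjE) (simp_all only: Ht scaleR_one scaleR_minus1_left inverse_minus_eq mult_minus_left)
    finally show ?thesis .
  qed
  show ?thesis using s2 L by auto
qed

lemma mobius_neg: "- mobius (Hmat t) q = mobius (Hmat (- t)) (- q)"
  by (simp only: mobius_def Hmat_sel sinh_minus cosh_minus of_real_minus minus_mult_minus mult_minus_left minus_minus
      minus_add_distrib[symmetric] mult_minus_right)



lemma gen_group_sub:
  assumes "\<And>f. f \<in> G \<Longrightarrow> restrict f qball \<in> gen_group H"
  shows "g \<in> gen_group G \<Longrightarrow> g \<in> gen_group H"
  apply (induction rule: gen_group.induct)
     apply (rule gen_group.gen_id)
    apply (erule assms)
   apply (erule (1) gen_group.gen_comp)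
  apply (erule gen_group.gen_inv)
  done

lemma restrict_congI:
  assumes "\<And>x. x \<in> qball \<Longrightarrow> f x = g x" "restrict g qball \<in> S"
  shows "restrict f qball \<in> S"
proof -
  have "restrict f qball = restrict g qball" using assms(1) by (rule restrict_ext)
  then show ?thesis using assms(2) by simp
qed

lemma norm_conj_unit: "u \<in> Sp1 \<Longrightarrow> norm (of_real 1 * u * q * qcnj u) = norm q"
  by (simp add: Sp1_def norm_mult)

lemma compose_restrict_eq:
  assumes "\<And>x. x \<in> qball \<Longrightarrow> N x \<in> qball" "\<And>x. x \<in> qball \<Longrightarrow> f x = M (N x)"
  shows "restrict f qball = compose qball (restrict M qball) (restrict N qball)"
  using assms by (auto simp: compose_def fun_eq_iff)

lemma right_trans_form:
  assumes A: "A \<in> Sp11" and R: "real_entries A"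
  shows "\<exists>t. (\<forall>q\<in>qball. induced (\<lambda>X. X ** A) q = mobius (Hmat t) q) \<or>
             (\<forall>q\<in>qball. induced (\<lambda>X. X ** A) q = - mobius (Hmat t) q)"
proof -
  define ra rb rc rd where "ra = qRe (mat_a A)" "rb = qRe (mat_b A)" "rc = qRe (mat_c A)" "rd = qRe (mat_d A)"
  have ent: "mat_a A = ra *\<^sub>R 1" "mat_b A = rb *\<^sub>R 1" "mat_c A = rc *\<^sub>R 1" "mat_d A = rd *\<^sub>R 1"
    using R unfolding real_entries_def ra_rb_rc_rd_def by (auto intro: realq_scaleR)
  have S: "qcnj (mat_a A) * mat_a A - qcnj (mat_b A) * mat_b A = 1"
     "qcnj (mat_a A) * mat_c A - qcnj (mat_b A) * mat_d A = 0"
     "qcnj (mat_c A) * mat_c A - qcnj (mat_d A) * mat_d A = -1"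
    using A unfolding Sp11_iff by auto
  have e1: "ra * ra - rb * rb = 1" using arg_cong[OF S(1), of qRe] by (simp add: ent)
  have e2: "ra * rc - rb * rd = 0" using arg_cong[OF S(2), of qRe] by (simp add: ent mult.commute)
  have e4: "rc * rc - rd * rd = -1" using arg_cong[OF S(3), of qRe] by (simp add: ent)
  have mob: "mobius A q = inverse (rc *\<^sub>R q + rd *\<^sub>R 1) * (ra *\<^sub>R q + rb *\<^sub>R 1)" for q
    by (simp add: mobius_def ent)
  obtain t where "(\<forall>q. inverse (rc *\<^sub>R q + rd *\<^sub>R 1) * (ra *\<^sub>R q + rb *\<^sub>R 1) = mobius (Hmat t) q) \<or>
             (\<forall>q. inverse (rc *\<^sub>R q + rd *\<^sub>R 1) * (ra *\<^sub>R q + rb *\<^sub>R 1) = - mobius (Hmat t) q)"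
    using real_mobius_cases[OF e1 e2 e4] by blast
  then show ?thesis using right_induced[OF A R] mob by metis
qed

lemma trans_in_model:
  assumes f: "f \<in> translation_maps"
  shows "restrict f qball \<in> gen_group model_maps"
  using f unfolding translation_maps_def
proof (elim UnE CollectE exE conjE)
  fix A assume fA: "f = induced (\<lambda>X. A ** X)" and A: "A \<in> Sp11" and C: "commutes_actions (\<lambda>X. A ** X)"
  let ?g = "\<lambda>q. of_real 1 * mat_d A * q * qcnj (mat_d A)"
  have dA: "mat_d A \<in> Sp1" using left_induced(1)[OF A C, of 0] by (simp add: qball_def)
  have "?g \<in> model_maps" unfolding model_maps_def using dA by blast
  then have "restrict ?g qball \<in> gen_group model_maps" by (rule gen_base)
  then show ?thesis
    by (rule restrict_congI[rotated]) (simp add: fA left_induced(2)[OF A C])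
next
  fix A assume fA: "f = induced (\<lambda>X. X ** A)" and A: "A \<in> Sp11" and C: "commutes_actions (\<lambda>X. X ** A)"
  have R: "real_entries A" using right_real[OF C] .
  obtain t where t: "(\<forall>q\<in>qball. f q = mobius (Hmat t) q) \<or> (\<forall>q\<in>qball. f q = - mobius (Hmat t) q)"
    using right_trans_form[OF A R] fA by blast
  have M: "restrict (mobius (Hmat s)) qball \<in> gen_group model_maps" for s
    by (rule gen_base) (auto simp: model_maps_def)
  have N: "restrict (\<lambda>q. of_real (-1) * 1 * q * qcnj 1) qball \<in> gen_group model_maps"
    by (rule gen_base) (unfold model_maps_def, use Sp1_1 in blast)
  from t show ?thesis
  proof
    assume "\<forall>q\<in>qball. f q = mobius (Hmat t) q"
    then show ?thesis by (intro restrict_congI[OF _ M]) auto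
  next
    assume h: "\<forall>q\<in>qball. f q = - mobius (Hmat t) q"
    have "restrict f qball = compose qball (restrict (mobius (Hmat (- t))) qball)
        (restrict (\<lambda>q. of_real (-1) * 1 * q * qcnj 1) qball)"
    proof (rule compose_restrict_eq)
      show "\<And>x. x \<in> qball \<Longrightarrow> of_real (- 1) * 1 * x * qcnj 1 \<in> qball" by (simp add: qball_def)
      show "\<And>x. x \<in> qball \<Longrightarrow> f x = mobius (Hmat (- t)) (of_real (- 1) * 1 * x * qcnj 1)"
        using h by (simp add: mobius_neg)
    qed
    then show ?thesis using gen_comp[OF M N] by simp
  qed
qed

lemma diag_trans:
  assumes u: "u \<in> Sp1"
  shows "induced (\<lambda>X. diag2 1 u ** X) \<in> translation_maps"
    "\<And>q. q \<in> qball \<Longrightarrow> induced (\<lambda>X. diag2 1 u ** X) q = of_real 1 * u * q * qcnj u"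
proof -
  have nu: "norm u = 1" using u by (simp add: Sp1_def)
  have S: "diag2 1 u \<in> Sp11" unfolding Sp11_iff using nu by (simp add: qcnj_mult_self)
  have cm: "diag2 1 u ** diag2 v 1 = diag2 v 1 ** diag2 1 u" for v unfolding qmat_eq_iff by simp
  have C: "commutes_actions (\<lambda>X. diag2 1 u ** X)"
    unfolding commutes_actions_def by (simp add: matrix_mul_assoc cm)
  show "induced (\<lambda>X. diag2 1 u ** X) \<in> translation_maps"
    unfolding translation_maps_def using S C by blast
  show "\<And>q. q \<in> qball \<Longrightarrow> induced (\<lambda>X. diag2 1 u ** X) q = of_real 1 * u * q * qcnj u"
    using left_induced(2)[OF S C] by simp
qed

lemma real_entries_comm: "real_entries A \<Longrightarrow> mat u ** A = A ** mat u"
  unfolding real_entries_def qmat_eq_iff by (auto intro: realq_commute)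

lemma right_trans:
  assumes A: "A \<in> Sp11" and R: "real_entries A"
  shows "induced (\<lambda>X. X ** A) \<in> translation_maps"
proof -
  have C: "commutes_actions (\<lambda>X. X ** A)"
    unfolding commutes_actions_def using real_entries_comm[OF R]
    by (simp add: matrix_mul_assoc[symmetric])
  show ?thesis unfolding translation_maps_def using A C by blast
qed

lemma I11_props: "I11 \<in> Sp11" "real_entries I11"
  by (simp_all add: Sp11_iff real_entries_def realq_def)

lemma Hmat_props: "Hmat t \<in> Sp11" "real_entries (Hmat t)"
proof -
  have h: "cosh t * cosh t - sinh t * sinh t = 1" using cosh_square_eq[of t] by (simp add: power2_eq_square)
  have h': "(of_real (cosh t) * of_real (cosh t) - of_real (sinh t) * of_real (sinh t) :: quat) = 1"
    using h by (metis of_real_1 of_real_diff of_real_mult)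
  have h2: "sinh t * sinh t - cosh t * cosh t = -1" using h by linarith
  show "Hmat t \<in> Sp11" unfolding Sp11_iff Hmat_sel qcnj_of_real
  proof (intro conjI)
    show "(of_real (cosh t) * of_real (cosh t) - of_real (sinh t) * of_real (sinh t) :: quat) = 1"
    proof -
      have "(of_real (cosh t) * of_real (cosh t) - of_real (sinh t) * of_real (sinh t) :: quat) = of_real (cosh t * cosh t - sinh t * sinh t)" by simp
      then show ?thesis using h by simp
    qed
    show "(of_real (cosh t) * of_real (sinh t) - of_real (sinh t) * of_real (cosh t) :: quat) = 0"
      using of_real_comm[of "cosh t" "of_real (sinh t)"] by simp
    show "(of_real (sinh t) * of_real (cosh t) - of_real (cosh t) * of_real (sinh t) :: quat) = 0"
      using of_real_comm[of "sinh t" "of_real (cosh t)"] by simp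
    show "(of_real (sinh t) * of_real (sinh t) - of_real (cosh t) * of_real (cosh t) :: quat) = -1"
    proof -
      have "(of_real (sinh t) * of_real (sinh t) - of_real (cosh t) * of_real (cosh t) :: quat) = of_real (sinh t * sinh t - cosh t * cosh t)" by simp
      then show ?thesis using h2 by simp
    qed
  qed
  show "real_entries (Hmat t)" by (simp add: real_entries_def)
qed

lemma model_in_trans:
  assumes f: "f \<in> model_maps"
  shows "restrict f qball \<in> gen_group translation_maps"
  using f unfolding model_maps_def
proof (elim UnE CollectE exE conjE)
  fix \<epsilon> u assume fe: "f = (\<lambda>q. of_real \<epsilon> * u * q * qcnj u)" and e: "\<epsilon> \<in> {1, -1}" and u: "u \<in> Sp1"
  have Cg: "restrict (induced (\<lambda>X. diag2 1 u ** X)) qball \<in> gen_group translation_maps"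
    by (rule gen_base[OF diag_trans(1)[OF u]])
  have Ng: "restrict (induced (\<lambda>X. X ** I11)) qball \<in> gen_group translation_maps"
    by (rule gen_base[OF right_trans[OF I11_props]])
  have Nv: "induced (\<lambda>X. X ** I11) q = - q" if "q \<in> qball" for q
    by (simp add: right_induced[OF I11_props that] mobius_def)
  from e show ?thesis
  proof
    assume "\<epsilon> = 1"
    then show ?thesis by (intro restrict_congI[OF _ Cg]) (simp add: fe diag_trans(2)[OF u])
  next
    assume "\<epsilon> \<in> {-1}"
    then have em: "\<epsilon> = -1" by simp
    have "restrict f qball = compose qball (restrict (induced (\<lambda>X. X ** I11)) qball)
        (restrict (induced (\<lambda>X. diag2 1 u ** X)) qball)"
    proof (rule compose_restrict_eq)
      show "induced (\<lambda>X. diag2 1 u ** X) x \<in> qball" if "x \<in> qball" for x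
        using that diag_trans(2)[OF u that] norm_conj_unit[OF u] by (simp add: qball_def)
      show "f x = induced (\<lambda>X. X ** I11) (induced (\<lambda>X. diag2 1 u ** X) x)" if x: "x \<in> qball" for x
      proof -
        have "induced (\<lambda>X. diag2 1 u ** X) x \<in> qball"
          using x diag_trans(2)[OF u x] norm_conj_unit[OF u] by (simp add: qball_def)
        then show ?thesis using Nv diag_trans(2)[OF u x] by (simp add: fe em)
      qed
    qed
    then show ?thesis using gen_comp[OF Ng Cg] by simp
  qed
next
  fix t assume ft: "f = mobius (Hmat t)"
  have "restrict (induced (\<lambda>X. X ** Hmat t)) qball \<in> gen_group translation_maps"
    by (rule gen_base[OF right_trans[OF Hmat_props]])
  then show ?thesis
    by (rule restrict_congI[rotated]) (simp add: ft right_induced[OF Hmat_props])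
qed

theorem proposition3p11:
  shows "gen_group translation_maps = gen_group model_maps"
proof
  show "gen_group translation_maps \<subseteq> gen_group model_maps"
    using gen_group_sub[of translation_maps model_maps] trans_in_model by blast
  show "gen_group model_maps \<subseteq> gen_group translation_maps"
    using gen_group_sub[of model_maps translation_maps] model_in_trans by blast
qed


end
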